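(* There exists a set of $510$ unit vectors in $\mathbb{R}^{10}$ such that the inner product of any two distinct vectors lies in $\{0,\pm\tfrac16,\pm\tfrac14,\pm\tfrac13,\pm\tfrac12,-1\}$. In particular the kissing number in dimension $10$ is at least $510$.
   Context: The kissing number in dimension $d$ is the maximal number of unit vectors in $\mathbb{R}^d$ with pairwise inner products at most $1/2$. *)

theory Defs
  imports "HOL-Analysis.Analysis" "HOL-Library.Extended_Nat"
begin

definition kissing_config :: "('a::euclidean_space) set \<Rightarrow> bool" where
  "kissing_config S \<longleftrightarrow>
     (\<forall>x\<in>S. norm x = 1) \<and> (\<forall>x\<in>S. \<forall>y\<in>S. x \<noteq> y \<longrightarrow> inner x y \<le> 1/2)"

definition kissing_number :: "('a::euclidean_space) itself \<Rightarrow> enat" where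
  "kissing_number _ = Sup {enat (card S) | S :: 'a set. finite S \<and> kissing_config S}"

end

theory Submission
  imports Defs
begin

definition hel :: "(nat \<Rightarrow> real) \<Rightarrow> nat \<Rightarrow> real" where
  "hel u k = ((\<Sum>j<k. u j) - real k * u k) / sqrt (real (k*(k+1)))"

lemma hel_mult: "hel u k * hel v k = ((\<Sum>j<k. u j) - real k * u k) * ((\<Sum>j<k. v j) - real k * v k) / real (k*(k+1))"
  unfolding hel_def by (simp add: field_simps)  

lemma helmert:
  "(\<Sum>k\<in>{1..5}. hel u k * hel v k) = (\<Sum>j<6. u j * v j) - (\<Sum>j<6. u j) * (\<Sum>j<6. v j) / 6"
  unfolding hel_mult
  by (simp add: eval_nat_numeral field_simps)

fun P :: "(int \<times> int) list \<Rightarrow> (int \<times> int) list \<Rightarrow> int" where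
  "P ((a,b)#xs) ((c,d)#ys) = 2*a*c+2*b*d-a*d-b*c + P xs ys"
| "P _ _ = 0"

definition rot :: "(int \<times> int) list \<Rightarrow> (int \<times> int) list" where
  "rot xs = map (\<lambda>(a,b). (a-b,a)) xs"

lemma P_sum: "length x = length y \<Longrightarrow>
  P x y = (\<Sum>j<length x. 2* fst (x!j)* fst (y!j) + 2* snd (x!j)* snd (y!j) - fst (x!j)* snd (y!j) - snd (x!j)* fst (y!j))"
proof (induction x arbitrary: y)
  case Nil then show ?case by simp
next
  case (Cons p x)
  then obtain q y' where y: "y = q # y'" by (cases y) auto
  with Cons have "length x = length y'" by simp
  with Cons.IH have "P x y' = (\<Sum>j<length x. 2* fst (x!j)* fst (y'!j) + 2* snd (x!j)* snd (y'!j) - fst (x!j)* snd (y'!j) - snd (x!j)* fst (y'!j))" by simp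
  then show ?case using y by (cases p, cases q) (simp del: sum.lessThan_Suc add: sum.lessThan_Suc_shift)
qed

lemma P_sym: "P x y = P y x"
  by (induction x y rule: P.induct) (auto simp: algebra_simps)

lemma rot_len[simp]: "length (rot x) = length x" by (simp add: rot_def)

lemma P_rot_rot: "P (rot x) (rot y) = P x y"
  by (induction x y rule: P.induct) (auto simp: rot_def algebra_simps)

lemma P_rot2: "P x (rot (rot y)) = P x (rot y) - P x y"
  by (induction x y rule: P.induct) (auto simp: rot_def algebra_simps)

lemma P_rot_self: "2 * P x (rot x) = P x x"
  by (induction x rule: list.induct) (auto simp: rot_def algebra_simps)

lemma rot6: "(rot ^^ 6) x = x"
  by (induction x) (auto simp: rot_def eval_nat_numeral)

lemma sum_fst_rot: "sum_list (map fst (rot x)) = sum_list (map fst x) - sum_list (map snd x)"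
  by (induction x) (auto simp: rot_def)
lemma sum_snd_rot: "sum_list (map snd (rot x)) = sum_list (map fst x)"
  by (induction x) (auto simp: rot_def)

definition cR :: "(int \<times> int) list \<Rightarrow> nat \<Rightarrow> real" where
  "cR x j = of_int (fst (x!j)) - of_int (snd (x!j)) / 2"
definition cI :: "(int \<times> int) list \<Rightarrow> nat \<Rightarrow> real" where
  "cI x j = sqrt 3 / 2 * of_int (snd (x!j))"
definition coord :: "(int \<times> int) list \<Rightarrow> nat \<Rightarrow> real" where
  "coord x n = (if n < 5 then hel (cR x) (n+1) else hel (cI x) (n-4)) / sqrt 18"

lemma coord_split: "(\<Sum>n<10. coord x n * coord y n) =
   ((\<Sum>k\<in>{1..5}. hel (cR x) k * hel (cR y) k) + (\<Sum>k\<in>{1..5}. hel (cI x) k * hel (cI y) k)) / 18"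
  by (simp add: coord_def eval_nat_numeral field_simps)

lemma cRI: "cR x j * cR y j + cI x j * cI y j =
   of_int (2 * fst (x!j) * fst (y!j) + 2 * snd (x!j) * snd (y!j) - fst (x!j) * snd (y!j) - snd (x!j) * fst (y!j)) / 2"
  by (simp add: cR_def cI_def field_simps)

lemma sum6: "length x = 6 \<Longrightarrow> sum_list (map f x) = (\<Sum>j<6. f (x!j))"
  by (simp add: sum_list_sum_nth atLeast0LessThan)

lemma coord_inner:
  assumes "length x = 6" "length y = 6" "sum_list (map fst x) = 0" "sum_list (map snd x) = 0"
    "sum_list (map fst y) = 0" "sum_list (map snd y) = 0"
  shows "(\<Sum>n<10. coord x n * coord y n) = real_of_int (P x y) / 36"
proof -
  have zx: "(\<Sum>j<6. cR x j) = 0" "(\<Sum>j<6. cI x j) = 0"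
    using assms sum6[of x fst] sum6[of x snd]
    by (simp_all add: cR_def cI_def sum_subtractf sum_divide_distrib[symmetric] sum_distrib_left[symmetric] flip: of_int_sum)
  have zy: "(\<Sum>j<6. cR y j) = 0" "(\<Sum>j<6. cI y j) = 0"
    using assms sum6[of y fst] sum6[of y snd]
    by (simp_all add: cR_def cI_def sum_subtractf sum_divide_distrib[symmetric] sum_distrib_left[symmetric] flip: of_int_sum)
  have "(\<Sum>n<10. coord x n * coord y n) = ((\<Sum>j<6. cR x j * cR y j) + (\<Sum>j<6. cI x j * cI y j)) / 18"
    unfolding coord_split helmert zx zy by simp
  also have "\<dots> = (\<Sum>j<6. cR x j * cR y j + cI x j * cI y j) / 18"
    by (simp add: sum.distrib)
  also have "\<dots> = real_of_int (P x y) / 36"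
    unfolding cRI using assms(1,2)
    by (simp add: P_sum of_int_sum sum_divide_distrib[symmetric])
  finally show ?thesis .
qed

definition okv :: "int \<Rightarrow> bool" where
  "okv p \<longleftrightarrow> p \<in> {0,6,-6,9,-9,12,-12,18,-18}"
definition okp :: "int \<Rightarrow> int \<Rightarrow> bool" where
  "okp p0 p1 \<longleftrightarrow> okv p0 \<and> okv p1 \<and> okv (p1 - p0)"
definition okA :: "int \<Rightarrow> bool" where
  "okA p \<longleftrightarrow> p \<in> {0,6,-6,9,-9,12,-12,18,-18,-36}"

fun chk :: "(int \<times> int) list list \<Rightarrow> bool" where
  "chk [] = True"
| "chk (t#ts) = (P t t = 36 \<and> length t = 6 \<and> sum_list (map fst t) = 0 \<and> sum_list (map snd t) = 0
      \<and> list_all (\<lambda>s. okp (P t s) (P t (rot s))) ts \<and> chk ts)"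

lemma chk_nth: "chk ts \<Longrightarrow> i < length ts \<Longrightarrow> P (ts!i) (ts!i) = 36 \<and> length (ts!i) = 6 \<and>
   sum_list (map fst (ts!i)) = 0 \<and> sum_list (map snd (ts!i)) = 0"
proof (induction ts arbitrary: i)
  case Nil then show ?case by simp
next
  case (Cons t ts) then show ?case by (cases i) auto
qed

lemma chk_pair: "chk ts \<Longrightarrow> i < j \<Longrightarrow> j < length ts \<Longrightarrow> okp (P (ts!i) (ts!j)) (P (ts!i) (rot (ts!j)))"
proof (induction ts arbitrary: i j)
  case Nil then show ?case by simp
next
  case (Cons t ts)
  then obtain j' where j: "j = Suc j'" by (cases j) auto
  show ?case
  proof (cases i)
    case 0
    with Cons j show ?thesis by (auto simp: list_all_length)
  next
    case (Suc i')
    with Cons j show ?thesis by auto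
  qed
qed

abbreviation R :: "nat \<Rightarrow> (int \<times> int) list \<Rightarrow> (int \<times> int) list" where
  "R k \<equiv> rot ^^ k"

lemma R_len[simp]: "length (R k x) = length x"
  by (induction k) auto

lemma R_sums: "sum_list (map fst x) = 0 \<Longrightarrow> sum_list (map snd x) = 0 \<Longrightarrow>
   sum_list (map fst (R k x)) = 0 \<and> sum_list (map snd (R k x)) = 0"
  by (induction k) (auto simp: sum_fst_rot sum_snd_rot)

lemma R_norm: "P (R k x) (R k x) = P x x"
  by (induction k) (auto simp: P_rot_rot)

lemma R6m: "R (6*m) x = x"
proof (induction m)
  case 0 then show ?case by simp
next
  case (Suc m)
  have "R (6 * Suc m) x = R 6 (R (6*m) x)" by (simp add: funpow_add)
  then show ?case using Suc rot6 by simp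
qed

lemma R_mod: "R k x = R (k mod 6) x"
proof -
  have k: "k = 6*(k div 6) + k mod 6" by simp
  have "R k x = R (6*(k div 6) + k mod 6) x" using k by simp
  also have "\<dots> = R (6*(k div 6)) (R (k mod 6) x)" by (simp only: funpow_add o_apply)
  also have "\<dots> = R (k mod 6) x" by (rule R6m)
  finally show ?thesis .
qed

lemma P_R_left: "P (R p u) v = P u (R (5*p) v)"
proof (induction p arbitrary: v)
  case 0 then show ?case by simp
next
  case (Suc p)
  have v: "v = rot (R 5 v)" using rot6[of v] by (simp add: eval_nat_numeral)
  have "P (R (Suc p) u) v = P (rot (R p u)) (rot (R 5 v))" using v by simp
  also have "\<dots> = P (R p u) (R 5 v)" by (rule P_rot_rot)
  also have "\<dots> = P u (R (5*p) (R 5 v))" by (rule Suc)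
  also have "\<dots> = P u (R (5*p+5) v)" by (simp only: funpow_add o_apply)
  also have "\<dots> = P u (R (5 * Suc p) v)"
    by (rule arg_cong[where f="\<lambda>k. P u (R k v)"]) simp
  finally show ?case .
qed

lemma P_R_rec: "P u (R (Suc (Suc k)) w) = P u (R (Suc k) w) - P u (R k w)"
  by (simp add: P_rot2)

lemma R0: "R 0 w = w" by simp
lemma R1: "R 1 w = rot w" by simp

lemma Rv2: "P u (R 2 w) = P u (rot w) - P u w"
  using P_R_rec[of u 0 w] by (simp add: eval_nat_numeral)
lemma Rv3: "P u (R 3 w) = - P u w"
  using P_R_rec[of u 1 w] Rv2[of u w] by (simp add: eval_nat_numeral)
lemma Rv4: "P u (R 4 w) = - P u (rot w)"
  using P_R_rec[of u 2 w] Rv2[of u w] Rv3[of u w] by (simp add: eval_nat_numeral)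
lemma Rv5: "P u (R 5 w) = P u w - P u (rot w)"
  using P_R_rec[of u 3 w] Rv3[of u w] Rv4[of u w] by (simp add: eval_nat_numeral)

lemma lt6: "(k::nat) < 6 \<Longrightarrow> k = 0 \<or> k = 1 \<or> k = 2 \<or> k = 3 \<or> k = 4 \<or> k = 5"
  by auto

lemma P_R_vals: "k < 6 \<Longrightarrow> P u (R k w) \<in> {P u w, P u (rot w), P u (rot w) - P u w, - P u w, - P u (rot w), P u w - P u (rot w)}"
proof -
  assume k: "k < 6"
  from lt6[OF k] show ?thesis
  proof (elim disjE)
  qed (simp_all only: Rv2 Rv3 Rv4 Rv5 R0 R1 insert_iff simp_thms)
qed

lemma okv_neg: "okv x \<Longrightarrow> okv (- x)"
  unfolding okv_def by auto

lemma okv_okA: "okv x \<Longrightarrow> okA x"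
  unfolding okv_def okA_def by auto

lemma key_pair: "okp (P u w) (P u (rot w)) \<Longrightarrow> okA (P u (R k w))"
proof -
  assume h: "okp (P u w) (P u (rot w))"
  define a where "a = P u w"
  define b where "b = P u (rot w)"
  have ha: "okv a" and hb: "okv b" and hc: "okv (b - a)" using h unfolding okp_def a_def b_def by auto
  have "P u (R k w) = P u (R (k mod 6) w)" by (subst R_mod) simp
  moreover have "P u (R (k mod 6) w) \<in> {a, b, b - a, - a, - b, a - b}"
    unfolding a_def b_def by (rule P_R_vals) simp
  ultimately have "P u (R k w) \<in> {a, b, b - a, - a, - b, a - b}" by simp
  moreover have "\<forall>x\<in>{a, b, b - a, - a, - b, a - b}. okA x"
  proof -
    have "okv (a - b)" using okv_neg[OF hc] by simp
    then show ?thesis using ha hb hc okv_neg[OF ha] okv_neg[OF hb] okv_okA by simp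
  qed
  ultimately show ?thesis by blast
qed

lemma key_self: "P u u = 36 \<Longrightarrow> k mod 6 \<noteq> 0 \<Longrightarrow> okA (P u (R k u))"
proof -
  assume h: "P u u = 36" "k mod 6 \<noteq> 0"
  have p1: "P u (rot u) = 18" using P_rot_self[of u] h(1) by simp
  define m where "m = k mod 6"
  have e: "P u (R k u) = P u (R m u)" unfolding m_def by (subst R_mod) simp
  have m6: "m < 6" unfolding m_def by simp
  have m0: "m \<noteq> 0" using h(2) unfolding m_def by simp
  from lt6[OF m6] m0 have "m = 1 \<or> m = 2 \<or> m = 3 \<or> m = 4 \<or> m = 5" by blast
  then have "P u (R m u) \<in> {18, -18, -36}"
  proof (elim disjE)
  qed (simp_all only: Rv2 Rv3 Rv4 Rv5 R1 p1 h(1), simp_all)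
  then show ?thesis using e unfolding okA_def by auto
qed

definition T :: "(int \<times> int) list list" where
  "T = [
   [(- 3, -2),(- 1,2),(1,0),(1,0),(1,0),(1,0)],
   [(- 3, -2),(1,0),(- 1,2),(1,0),(1,0),(1,0)],
   [(- 3, -2),(1,0),(1,0),(- 1,2),(1,0),(1,0)],
   [(- 3, -2),(1,0),(1,0),(1,0),(- 1,2),(1,0)],
   [(- 3, -2),(1,0),(1,0),(1,0),(1,0),(- 1,2)],
   [(- 3,0),(0,0),(0,0),(0,0),(0,0),(3,0)],
   [(- 3,0),(0,0),(0,0),(0,0),(3,0),(0,0)],
   [(- 3,0),(0,0),(0,0),(3,0),(0,0),(0,0)],
   [(- 3,0),(0,0),(3,0),(0,0),(0,0),(0,0)],
   [(- 3,0),(3,0),(0,0),(0,0),(0,0),(0,0)],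
   [(- 2, -3),(0,1),(0,1),(0,1),(0,1),(2, -1)],
   [(- 2, -3),(0,1),(0,1),(0,1),(2, -1),(0,1)],
   [(- 2, -3),(0,1),(0,1),(2, -1),(0,1),(0,1)],
   [(- 2, -3),(0,1),(2, -1),(0,1),(0,1),(0,1)],
   [(- 2, -3),(2, -1),(0,1),(0,1),(0,1),(0,1)],
   [(- 2, -1),(- 2, -1),(1, -1),(1, -1),(1,2),(1,2)],
   [(- 2, -1),(- 2, -1),(1, -1),(1,2),(1, -1),(1,2)],
   [(- 2, -1),(- 2, -1),(1, -1),(1,2),(1,2),(1, -1)],
   [(- 2, -1),(- 2, -1),(1,2),(1, -1),(1, -1),(1,2)],
   [(- 2, -1),(- 2, -1),(1,2),(1, -1),(1,2),(1, -1)],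
   [(- 2, -1),(- 2, -1),(1,2),(1,2),(1, -1),(1, -1)],
   [(- 2, -1),(1, -1),(- 2, -1),(1, -1),(1,2),(1,2)],
   [(- 2, -1),(1, -1),(- 2, -1),(1,2),(1, -1),(1,2)],
   [(- 2, -1),(1, -1),(- 2, -1),(1,2),(1,2),(1, -1)],
   [(- 2, -1),(1, -1),(1, -1),(- 2, -1),(1,2),(1,2)],
   [(- 2, -1),(1, -1),(1, -1),(1,2),(- 2, -1),(1,2)],
   [(- 2, -1),(1, -1),(1, -1),(1,2),(1,2),(- 2, -1)],
   [(- 2, -1),(1, -1),(1,2),(- 2, -1),(1, -1),(1,2)],
   [(- 2, -1),(1, -1),(1,2),(- 2, -1),(1,2),(1, -1)],
   [(- 2, -1),(1, -1),(1,2),(1, -1),(- 2, -1),(1,2)],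
   [(- 2, -1),(1, -1),(1,2),(1, -1),(1,2),(- 2, -1)],
   [(- 2, -1),(1, -1),(1,2),(1,2),(- 2, -1),(1, -1)],
   [(- 2, -1),(1, -1),(1,2),(1,2),(1, -1),(- 2, -1)],
   [(- 2, -1),(1,2),(- 2, -1),(1, -1),(1, -1),(1,2)],
   [(- 2, -1),(1,2),(- 2, -1),(1, -1),(1,2),(1, -1)],
   [(- 2, -1),(1,2),(- 2, -1),(1,2),(1, -1),(1, -1)],
   [(- 2, -1),(1,2),(1, -1),(- 2, -1),(1, -1),(1,2)],
   [(- 2, -1),(1,2),(1, -1),(- 2, -1),(1,2),(1, -1)],
   [(- 2, -1),(1,2),(1, -1),(1, -1),(- 2, -1),(1,2)],
   [(- 2, -1),(1,2),(1, -1),(1, -1),(1,2),(- 2, -1)],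
   [(- 2, -1),(1,2),(1, -1),(1,2),(- 2, -1),(1, -1)],
   [(- 2, -1),(1,2),(1, -1),(1,2),(1, -1),(- 2, -1)],
   [(- 2, -1),(1,2),(1,2),(- 2, -1),(1, -1),(1, -1)],
   [(- 2, -1),(1,2),(1,2),(1, -1),(- 2, -1),(1, -1)],
   [(- 2, -1),(1,2),(1,2),(1, -1),(1, -1),(- 2, -1)],
   [(- 1,0),(- 1,0),(- 1,0),(- 1,0),(1, -2),(3,2)],
   [(- 1,0),(- 1,0),(- 1,0),(- 1,0),(3,2),(1, -2)],
   [(- 1,0),(- 1,0),(- 1,0),(1, -2),(- 1,0),(3,2)],
   [(- 1,0),(- 1,0),(- 1,0),(1, -2),(3,2),(- 1,0)],
   [(- 1,0),(- 1,0),(- 1,0),(3,2),(- 1,0),(1, -2)],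
   [(- 1,0),(- 1,0),(- 1,0),(3,2),(1, -2),(- 1,0)],
   [(- 1,0),(- 1,0),(1, -2),(- 1,0),(- 1,0),(3,2)],
   [(- 1,0),(- 1,0),(1, -2),(- 1,0),(3,2),(- 1,0)],
   [(- 1,0),(- 1,0),(1, -2),(3,2),(- 1,0),(- 1,0)],
   [(- 1,0),(- 1,0),(3,2),(- 1,0),(- 1,0),(1, -2)],
   [(- 1,0),(- 1,0),(3,2),(- 1,0),(1, -2),(- 1,0)],
   [(- 1,0),(- 1,0),(3,2),(1, -2),(- 1,0),(- 1,0)],
   [(- 1,0),(1, -2),(- 1,0),(- 1,0),(- 1,0),(3,2)],
   [(- 1,0),(1, -2),(- 1,0),(- 1,0),(3,2),(- 1,0)],
   [(- 1,0),(1, -2),(- 1,0),(3,2),(- 1,0),(- 1,0)],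
   [(- 1,0),(1, -2),(3,2),(- 1,0),(- 1,0),(- 1,0)],
   [(- 1,0),(3,2),(- 1,0),(- 1,0),(- 1,0),(1, -2)],
   [(- 1,0),(3,2),(- 1,0),(- 1,0),(1, -2),(- 1,0)],
   [(- 1,0),(3,2),(- 1,0),(1, -2),(- 1,0),(- 1,0)],
   [(- 1,0),(3,2),(1, -2),(- 1,0),(- 1,0),(- 1,0)],
   [(- 1,1),(- 1,1),(- 1,1),(1, -1),(1, -1),(1, -1)],
   [(- 1,1),(- 1,1),(1, -1),(- 1,1),(1, -1),(1, -1)],
   [(- 1,1),(- 1,1),(1, -1),(1, -1),(- 1,1),(1, -1)],
   [(- 1,1),(- 1,1),(1, -1),(1, -1),(1, -1),(- 1,1)],
   [(- 1,1),(1, -1),(- 1,1),(- 1,1),(1, -1),(1, -1)],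
   [(- 1,1),(1, -1),(- 1,1),(1, -1),(- 1,1),(1, -1)],
   [(- 1,1),(1, -1),(- 1,1),(1, -1),(1, -1),(- 1,1)],
   [(- 1,1),(1, -1),(1, -1),(- 1,1),(- 1,1),(1, -1)],
   [(- 1,1),(1, -1),(1, -1),(- 1,1),(1, -1),(- 1,1)],
   [(- 1,1),(1, -1),(1, -1),(1, -1),(- 1,1),(- 1,1)],
   [(0,0),(- 3,0),(0,0),(0,0),(0,0),(3,0)],
   [(0,0),(- 3,0),(0,0),(0,0),(3,0),(0,0)],
   [(0,0),(- 3,0),(0,0),(3,0),(0,0),(0,0)],
   [(0,0),(- 3,0),(3,0),(0,0),(0,0),(0,0)],
   [(0,0),(0,0),(- 3,0),(0,0),(0,0),(3,0)],
   [(0,0),(0,0),(- 3,0),(0,0),(3,0),(0,0)],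
   [(0,0),(0,0),(- 3,0),(3,0),(0,0),(0,0)],
   [(0,0),(0,0),(0,0),(- 3,0),(0,0),(3,0)],
   [(0,0),(0,0),(0,0),(- 3,0),(3,0),(0,0)],
   [(0,0),(0,0),(0,0),(0,0),(- 3,0),(3,0)]]"

lemma chkT: "chk T"
  by code_simp

lemma lenT: "length T = 85"
  by (simp add: T_def)

lemma pair_ok:
  assumes "i < 85" "j < 85" "p < 6" "q < 6" "(i,p) \<noteq> (j,q)"
  shows "okA (P (R p (T!i)) (R q (T!j)))"
proof -
  have e: "P (R p (T!i)) (R q (T!j)) = P (T!i) (R (5*p+q) (T!j))"
    by (simp add: P_R_left funpow_add)
  consider "i = j" | "i < j" | "j < i" by linarith
  then show ?thesis
  proof cases
    case 1
    then have "p \<noteq> q" using assms by auto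
    then have "(5*p+q) mod 6 \<noteq> 0" using assms(3,4) by presburger
    moreover have "P (T!i) (T!i) = 36" using chk_nth[OF chkT, of i] assms lenT by auto
    ultimately show ?thesis using e 1 key_self by simp
  next
    case 2
    then show ?thesis using e key_pair chk_pair[OF chkT 2] assms lenT by simp
  next
    case 3
    have "P (R p (T!i)) (R q (T!j)) = P (R q (T!j)) (R p (T!i))" by (rule P_sym)
    also have "\<dots> = P (T!j) (R (5*q+p) (T!i))" by (simp add: P_R_left funpow_add)
    finally show ?thesis using key_pair chk_pair[OF chkT 3] assms lenT by simp
  qed
qed

lemma vec_good:
  assumes "i < 85"
  shows "length (R p (T!i)) = 6 \<and> sum_list (map fst (R p (T!i))) = 0 \<and> sum_list (map snd (R p (T!i))) = 0
     \<and> P (R p (T!i)) (R p (T!i)) = 36"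
  using chk_nth[OF chkT, of i] assms lenT R_sums[of "T!i" p] R_norm[of p "T!i"] by auto

theorem mainTheorem6:
  shows "(\<exists>S :: (real^10) set. finite S \<and> card S = 510 \<and> (\<forall>x\<in>S. norm x = 1) \<and>
            (\<forall>x\<in>S. \<forall>y\<in>S. x \<noteq> y \<longrightarrow>
               inner x y \<in> {0, 1/6, -1/6, 1/4, -1/4, 1/3, -1/3, 1/2, -1/2, -1}))
         \<and> kissing_number TYPE(real^10) \<ge> 510"
proof -
  have "finite (UNIV :: 10 set)" by simp
  then obtain h :: "10 \<Rightarrow> nat" where hb: "bij_betw h (UNIV :: 10 set) {0..<card (UNIV :: 10 set)}"
    using ex_bij_betw_finite_nat by blast
  then have hb': "bij_betw h (UNIV :: 10 set) {..<10}" by (simp add: atLeast0LessThan)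
  define V :: "(int \<times> int) list \<Rightarrow> real^10" where "V x = (\<chi> i. coord x (h i))" for x
  have innerV: "inner (V x) (V y) = (\<Sum>n<10. coord x n * coord y n)" for x y
  proof -
    have "inner (V x) (V y) = (\<Sum>i\<in>UNIV. coord x (h i) * coord y (h i))"
      by (simp add: V_def inner_vec_def)
    also have "\<dots> = (\<Sum>n<10. coord x n * coord y n)"
      by (rule sum.reindex_bij_betw[OF hb'])
    finally show ?thesis .
  qed
  define W where "W = (\<lambda>(i::nat,p::nat). R p (T!i))"
  define D where "D = {..<(85::nat)} \<times> {..<(6::nat)}"
  have innerW: "inner (V (W d)) (V (W e)) = real_of_int (P (W d) (W e)) / 36" if "d \<in> D" "e \<in> D" for d e
  proof -
    obtain i p where d: "d = (i,p)" "i < 85" "p < 6" using \<open>d \<in> D\<close> D_def by auto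
    obtain j q where e: "e = (j,q)" "j < 85" "q < 6" using \<open>e \<in> D\<close> D_def by auto
    show ?thesis unfolding innerV W_def d e using vec_good[OF d(2), of p] vec_good[OF e(2), of q]
      by (simp add: coord_inner)
  qed
  have PW_self: "P (W d) (W d) = 36" if "d \<in> D" for d
    using that vec_good unfolding D_def W_def by auto
  have PW_pair: "okA (P (W d) (W e))" if "d \<in> D" "e \<in> D" "d \<noteq> e" for d e
    using that pair_ok unfolding D_def W_def by auto
  define S where "S = (\<lambda>d. V (W d)) ` D"
  have normS: "norm (V (W d)) = 1" if "d \<in> D" for d
    using innerW[OF that that] PW_self[OF that] by (simp add: norm_eq_sqrt_inner)
  have vals: "inner (V (W d)) (V (W e)) \<in> {0, 1/6, -1/6, 1/4, -1/4, 1/3, -1/3, 1/2, -1/2, -1}"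
    if "d \<in> D" "e \<in> D" "d \<noteq> e" for d e
    using innerW[OF that(1,2)] PW_pair[OF that] unfolding okA_def by auto
  have inj: "inj_on (\<lambda>d. V (W d)) D"
  proof (rule inj_onI)
    fix d e assume de: "d \<in> D" "e \<in> D" "V (W d) = V (W e)"
    show "d = e"
    proof (rule ccontr)
      assume "d \<noteq> e"
      then have ok: "okA (P (W d) (W e))" using PW_pair de by auto
      have "inner (V (W d)) (V (W e)) = inner (V (W d)) (V (W d))" using de(3) by simp
      also have "\<dots> = (norm (V (W d)))^2" by (simp add: power2_norm_eq_inner)
      also have "\<dots> = 1" using normS[OF de(1)] by simp
      finally have "inner (V (W d)) (V (W e)) = 1" .
      then have "P (W d) (W e) = 36" using innerW[OF de(1,2)] by simp
      with ok show False unfolding okA_def by auto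
    qed
  qed
  have finS: "finite S" unfolding S_def D_def by simp
  have cardS: "card S = 510" unfolding S_def using card_image[OF inj] by (simp add: D_def)
  have normS': "\<forall>x\<in>S. norm x = 1" unfolding S_def using normS by auto
  have valS: "\<forall>x\<in>S. \<forall>y\<in>S. x \<noteq> y \<longrightarrow>
               inner x y \<in> {0, 1/6, -1/6, 1/4, -1/4, 1/3, -1/3, 1/2, -1/2, -1}"
    unfolding S_def using vals by fastforce
  have kc: "kissing_config S"
    unfolding kissing_config_def using normS' valS by fastforce
  have "enat (card S) \<in> {enat (card S) | S :: (real^10) set. finite S \<and> kissing_config S}"
    using finS kc by blast
  then have "enat (card S) \<le> kissing_number TYPE(real^10)"
    unfolding kissing_number_def by (rule Sup_upper)
  then have "510 \<le> kissing_number TYPE(real^10)"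
    using cardS by (simp add: numeral_eq_enat)
  then show ?thesis using finS cardS normS' valS by blast
qed

end
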